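(* Let $d\geq 1$ and $n>d$ be integers, and let $\mathcal C(n,d)=\operatorname{conv}\{\mu_d(1),\dots,\mu_d(n)\}$ be the cyclic polytope, where $\mu_d(t)=(t,t^2,\dots,t^d)$. Let $\Delta$ and $\Delta'$ be two triangulations of (the vertex set of) $\mathcal C(n,d)$ which differ by a flip $[\Delta\rightsquigarrow\Delta']$. Then \[ \Delta\leq_1\Delta' \iff \begin{cases} \mathrm{gkz}_\Delta>_{\mathrm{lex}}\mathrm{gkz}_{\Delta'} & \text{if } d \text{ is even},\\ \mathrm{gkz}_\Delta<_{\mathrm{lex}}\mathrm{gkz}_{\Delta'} & \text{if } d \text{ is odd}.\end{cases} \]
   Context: A triangulation of a finite point configuration $P\subset\mathbb R^d$ is a subdivision of $\operatorname{conv}(P)$ into $d$-simplices whose vertices are points of $P$. A circuit is a minimally affinely dependent subset of $P$; for the vertex set of $\mathcal C(n,d)$ every circuit consists of $d+2$ vertices $\mu_d(t_1),\dots,\mu_d(t_{d+2})$ ($t_1<\dots<t_{d+2}$) and is combinatorially a cyclic polytope $\mathcal C(d+2,d)$, which has exactly two triangulations. These are obtained by projecting (forgetting the last coordinate) the lower facets, resp. the upper facets, of the $(d+1)$-simplex $\operatorname{conv}\{\mu_{d+1}(t_1),\dots,\mu_{d+1}(t_{d+2})\}$; they are called the lower and the upper triangulation of the circuit. Two triangulations $\Delta,\Delta'$ differ by a flip if they agree outside some circuit $C$ and, restricted to $C$, one of them is the lower and the other the upper triangulation of $C$. The flip $[\Delta\rightsquigarrow\Delta']$ is an up-flip if $\Delta$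 restricts to the lower and $\Delta'$ to the upper triangulation of $C$; then one writes $\Delta\leq_1\Delta'$. (The first higher Stasheff–Tamari order $\mathrm{HST}_1(n,d)$ is the reflexive–transitive closure of this relation.) For a triangulation $\Delta$ of the vertex set $\{\mu_d(1),\dots,\mu_d(n)\}$, its GKZ-vector is $\mathrm{gkz}_\Delta=(\mathrm{gkz}_\Delta(\mu_d(1)),\dots,\mathrm{gkz}_\Delta(\mu_d(n)))\in\mathbb R^n$ (vertices in the natural order along the moment curve), where $\mathrm{gkz}_\Delta(p)$ is the sum of the normalized volumes ($d!$ times Euclidean volume) of the simplices of $\Delta$ having $p$ as a vertex. $>_{\mathrm{lex}}$, $<_{\mathrm{lex}}$ denote the lexicographic order on $\mathbb R^n$. *)

theory Defs
  imports "HOL-Analysis.Analysis"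
begin

text \<open>Points of R^d are modelled as vectors of type real^'d, d = CARD('d::{finite,wellorder}).
  The coordinates are ordered by the well-order on 'd; the k-th coordinate
  (k = 1..d) of the moment curve is t^k.\<close>

definition coord_index :: "'d::{finite,wellorder} \<Rightarrow> nat" where
  "coord_index i = Suc (card {j. j < i})"

definition moment :: "real \<Rightarrow> real ^ ('d::{finite,wellorder})" where
  "moment t = (\<chi> i. t ^ coord_index i)"

definition cvert :: "nat \<Rightarrow> real ^ ('d::{finite,wellorder})" where
  "cvert i = moment (real i)"

text \<open>Simplices are represented by their vertex index sets (subsets of {1..n}).\<close>
definition is_dsimplex :: "nat \<Rightarrow> nat set \<Rightarrow> 'd::{finite,wellorder} itself \<Rightarrow> bool" where
  "is_dsimplex n S _ \<longleftrightarrow> S \<subseteq> {1..n} \<and> card S = CARD('d::{finite,wellorder}) + 1 \<and>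
      \<not> affine_dependent ((cvert :: nat \<Rightarrow> real ^ ('d::{finite,wellorder})) ` S)"

definition triangulation :: "nat \<Rightarrow> nat set set \<Rightarrow> 'd::{finite,wellorder} itself \<Rightarrow> bool" where
  "triangulation n T D \<longleftrightarrow> finite T \<and>
     (\<forall>S\<in>T. is_dsimplex n S D) \<and>
     (\<Union>S\<in>T. convex hull ((cvert :: nat \<Rightarrow> real ^ ('d::{finite,wellorder})) ` S))
        = convex hull ((cvert :: nat \<Rightarrow> real ^ ('d::{finite,wellorder})) ` {1..n}) \<and>
     (\<forall>S\<in>T. \<forall>S'\<in>T.
        convex hull ((cvert :: nat \<Rightarrow> real ^ ('d::{finite,wellorder})) ` S) \<inter> convex hull (cvert ` S')
          = convex hull (cvert ` (S \<inter> S')))"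

definition circuit :: "nat \<Rightarrow> nat set \<Rightarrow> 'd::{finite,wellorder} itself \<Rightarrow> bool" where
  "circuit n C _ \<longleftrightarrow> C \<subseteq> {1..n} \<and> affine_dependent ((cvert :: nat \<Rightarrow> real ^ ('d::{finite,wellorder})) ` C) \<and>
     (\<forall>C'. C' \<subset> C \<longrightarrow> \<not> affine_dependent ((cvert :: nat \<Rightarrow> real ^ ('d::{finite,wellorder})) ` C'))"

text \<open>Lower / upper facets of the lifted simplex conv{mu_(d+1)(t) : t in C}:
  a facet F (d+1 of the points of C) is lower iff the non-vertical hyperplane
  through its lifted points, i.e. the graph of an affine function
  x \<mapsto> a \<bullet> x + b, has the remaining lifted point strictly above it
  (last coordinate t^(d+1)); upper iff strictly below.  Projecting
  (forgetting the last coordinate) gives the lower/upper triangulation.\<close>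
definition lower_triang :: "nat set \<Rightarrow> 'd::{finite,wellorder} itself \<Rightarrow> nat set set" where
  "lower_triang C _ = {F. F \<subseteq> C \<and> card F = CARD('d::{finite,wellorder}) + 1 \<and>
     (\<exists>(a :: real ^ ('d::{finite,wellorder})) b.
        (\<forall>i\<in>F. a \<bullet> cvert i + b = real i ^ (CARD('d::{finite,wellorder}) + 1)) \<and>
        (\<forall>j\<in>C - F. a \<bullet> cvert j + b < real j ^ (CARD('d::{finite,wellorder}) + 1)))}"

definition upper_triang :: "nat set \<Rightarrow> 'd::{finite,wellorder} itself \<Rightarrow> nat set set" where
  "upper_triang C _ = {F. F \<subseteq> C \<and> card F = CARD('d::{finite,wellorder}) + 1 \<and>
     (\<exists>(a :: real ^ ('d::{finite,wellorder})) b.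
        (\<forall>i\<in>F. a \<bullet> cvert i + b = real i ^ (CARD('d::{finite,wellorder}) + 1)) \<and>
        (\<forall>j\<in>C - F. a \<bullet> cvert j + b > real j ^ (CARD('d::{finite,wellorder}) + 1)))}"

definition restrict_to :: "nat set set \<Rightarrow> nat set \<Rightarrow> nat set set" where
  "restrict_to T C = {S\<in>T. S \<subseteq> C}"

definition outside :: "nat set set \<Rightarrow> nat set \<Rightarrow> nat set set" where
  "outside T C = {S\<in>T. \<not> S \<subseteq> C}"

definition up_flip :: "nat \<Rightarrow> nat set set \<Rightarrow> nat set set \<Rightarrow> 'd::{finite,wellorder} itself \<Rightarrow> bool" where
  "up_flip n T T' D \<longleftrightarrow> (\<exists>C. circuit n C D \<and> outside T C = outside T' C \<and>
      restrict_to T C = lower_triang C D \<and> restrict_to T' C = upper_triang C D)"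

definition differ_by_flip :: "nat \<Rightarrow> nat set set \<Rightarrow> nat set set \<Rightarrow> 'd::{finite,wellorder} itself \<Rightarrow> bool" where
  "differ_by_flip n T T' D \<longleftrightarrow> up_flip n T T' D \<or> up_flip n T' T D"

definition gkz_entry :: "nat set set \<Rightarrow> nat \<Rightarrow> 'd::{finite,wellorder} itself \<Rightarrow> real" where
  "gkz_entry T i _ = (\<Sum>S\<in>{S\<in>T. i \<in> S}.
      fact CARD('d::{finite,wellorder}) * measure lebesgue (convex hull ((cvert :: nat \<Rightarrow> real ^ ('d::{finite,wellorder})) ` S)))"

definition gkz :: "nat \<Rightarrow> nat set set \<Rightarrow> 'd::{finite,wellorder} itself \<Rightarrow> real list" where
  "gkz n T D = map (\<lambda>i. gkz_entry T i D) [1..<n+1]"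

definition lex_less :: "real list \<Rightarrow> real list \<Rightarrow> bool" where
  "lex_less xs ys \<longleftrightarrow> lexordp (<) xs ys"

end

theory Submission
  imports Defs "HOL-Computational_Algebra.Polynomial"
begin

lemma ci_range: "coord_index (i::'d::{finite,wellorder}) \<in> {1..CARD('d)}"
proof -
  have "{j. j < i} \<subset> (UNIV::'d set)" by auto
  then have "card {j. j < i} < CARD('d)" by (simp add: psubset_card_mono)
  then show ?thesis by (simp add: coord_index_def)
qed

lemma ci_inj: "inj (coord_index :: 'd::{finite,wellorder} \<Rightarrow> nat)"
proof -
  have lt: "coord_index i < coord_index i'" if "i < i'" for i i' :: 'd
  proof -
    have "{j. j < i} \<subset> {j. j < i'}" using that by auto
    then have "card {j. j < i} < card {j. j < i'}" by (simp add: psubset_card_mono)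
    then show ?thesis by (simp add: coord_index_def)
  qed
  show ?thesis
    by (rule injI, metis lt less_irrefl linorder_cases)
qed

lemma ci_bij: "bij_betw (coord_index :: 'd::{finite,wellorder} \<Rightarrow> nat) UNIV {1..CARD('d)}"
proof -
  have r: "\<And>i::'d. coord_index i \<in> {1..CARD('d)}" by (rule ci_range)
  have "coord_index ` (UNIV::'d set) \<subseteq> {1..CARD('d)}" using r by auto
  moreover have "card (coord_index ` (UNIV::'d set)) = card {1..CARD('d)}"
    using card_image[OF ci_inj[where 'd='d]] by simp
  ultimately have "coord_index ` (UNIV::'d set) = {1..CARD('d)}"
    by (simp add: card_subset_eq)
  then show ?thesis using ci_inj by (simp add: bij_betw_def)
qed

lemma rep_poly:
  fixes a :: "real ^ 'd::{finite,wellorder}" and b :: real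
  shows "\<exists>p. degree p \<le> CARD('d) \<and> (\<forall>t. a \<bullet> (moment t :: real^('d::{finite,wellorder})) + b = poly p t)"
proof -
  define p where "p = [:b:] + (\<Sum>i\<in>UNIV. monom (a$i) (coord_index i))"
  have "degree p \<le> CARD('d)"
  proof (rule degree_le, intro allI impI)
    fix k assume k: "CARD('d) < k"
    have r: "\<And>i::'d. coord_index i \<in> {1..CARD('d)}" by (rule ci_range)
    have "coeff p k = (\<Sum>i\<in>UNIV. coeff (monom (a$i) (coord_index i)) k)"
      using k by (simp add: p_def coeff_sum coeff_pCons split: nat.split)
    also have "\<dots> = 0"
    proof (intro sum.neutral ballI)
      fix x :: 'd
      have "coord_index x \<noteq> k" using r[of x] k by auto
      then show "coeff (monom (a$x) (coord_index x)) k = 0" by (simp add: coeff_monom)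
    qed
    finally show "coeff p k = 0" .
  qed
  moreover have "a \<bullet> (moment t :: real^('d::{finite,wellorder})) + b = poly p t" for t
    by (simp add: p_def poly_sum poly_monom inner_vec_def moment_def mult.commute)
  ultimately show ?thesis by blast
qed

lemma surj_poly:
  fixes p :: "real poly"
  assumes "degree p \<le> CARD('d::{finite,wellorder})"
  shows "\<exists>(a::real^('d::{finite,wellorder})) b. \<forall>t. a \<bullet> (moment t :: real^('d::{finite,wellorder})) + b = poly p t"
proof -
  define a :: "real^('d::{finite,wellorder})" where "a = (\<chi> i. coeff p (coord_index i))"
  have "a \<bullet> (moment t :: real^('d::{finite,wellorder})) + coeff p 0 = poly p t" for t
  proof -
    have "a \<bullet> (moment t :: real^('d::{finite,wellorder})) = (\<Sum>i\<in>(UNIV::'d set). coeff p (coord_index i) * t ^ coord_index i)"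
      by (simp add: a_def inner_vec_def moment_def inner_real_def)
    also have "\<dots> = (\<Sum>k\<in>{1..CARD('d)}. coeff p k * t ^ k)"
      using sum.reindex_bij_betw[OF ci_bij, of "\<lambda>k. coeff p k * t ^ k"] by simp
    finally have 1: "a \<bullet> (moment t :: real^('d::{finite,wellorder})) = (\<Sum>k\<in>{1..CARD('d)}. coeff p k * t ^ k)" .
    have ins: "insert 0 {1..CARD('d)} = {..CARD('d)}" by auto
    have "(\<Sum>k\<le>CARD('d). coeff p k * t ^ k) = coeff p 0 + (\<Sum>k\<in>{1..CARD('d)}. coeff p k * t ^ k)"
      by (subst ins[symmetric]) (simp add: sum.insert)
    with 1 have "a \<bullet> (moment t :: real^('d::{finite,wellorder})) + coeff p 0 = (\<Sum>k\<le>CARD('d). coeff p k * t ^ k)" by simp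
    also have "\<dots> = (\<Sum>k\<le>degree p. coeff p k * t ^ k)"
      using assms by (intro sum.mono_neutral_right) (auto simp: coeff_eq_0)
    also have "\<dots> = poly p t" by (simp add: poly_altdef)
    finally show ?thesis .
  qed
  then show ?thesis by blast
qed

definition pr :: "real set \<Rightarrow> real poly" where
  "pr F = (\<Prod>f\<in>F. [:-f, 1:])"

lemma poly_pr: "poly (pr F) t = (\<Prod>f\<in>F. t - f)"
  by (simp add: pr_def poly_prod)

lemma degree_pr: "finite F \<Longrightarrow> degree (pr F) = card F"
  unfolding pr_def by (subst degree_prod_eq_sum_degree) auto

lemma lc_pr: "lead_coeff (pr F) = 1"
  by (simp add: pr_def lead_coeff_prod)

lemma degree_top: 
  assumes "finite F" "card F = Suc m"
  shows "degree (monom 1 (Suc m) - pr F) \<le> m"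
proof (rule degree_le, intro allI impI)
  fix k assume k: "m < k"
  have dp: "degree (pr F) = Suc m" using assms degree_pr by simp
  show "coeff (monom 1 (Suc m) - pr F) k = 0"
  proof (cases "k = Suc m")
    case True
    then show ?thesis using lc_pr[of F] dp by (simp add: coeff_monom)
  next
    case False
    then have "k > Suc m" using k by simp
    then show ?thesis using dp by (simp add: coeff_monom coeff_eq_0)
  qed
qed

lemma interp_unique:
  fixes p :: "real poly"
  assumes "finite F" "card F = Suc m" "degree p \<le> m"
    and "\<forall>f\<in>F. poly p f = f ^ Suc m"
  shows "t ^ Suc m - poly p t = (\<Prod>f\<in>F. t - f)"
proof -
  define q where "q = monom 1 (Suc m) - pr F - p"
  have dq: "degree q \<le> m"
    unfolding q_def using degree_diff_le[OF degree_top[OF assms(1,2)] assms(3)] .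
  have "F \<subseteq> {x. poly q x = 0}"
    using assms(4) \<open>finite F\<close> by (auto simp: q_def poly_pr poly_monom prod_zero_iff)
  have "q = 0"
  proof (rule ccontr)
    assume "q \<noteq> 0"
    then have "card {x. poly q x = 0} \<le> m" using card_poly_roots_bound dq by fastforce
    moreover have "card F \<le> card {x. poly q x = 0}"
      using \<open>F \<subseteq> _\<close> \<open>q \<noteq> 0\<close> poly_roots_finite card_mono by metis
    ultimately show False using assms(2) by simp
  qed
  then have "poly q t = 0" by simp
  then show ?thesis by (simp add: q_def poly_pr poly_monom)
qed

lemma sign_prod:
  fixes t :: real
  assumes "finite F" "\<forall>f\<in>F. t < f"
  shows "(-1) ^ card F * (\<Prod>f\<in>F. t - f) > 0"
  using assms
proof (induction F rule: finite_induct)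
  case empty
  then show ?case by simp
next
  case (insert x F)
  then have "(-1) ^ card F * (\<Prod>f\<in>F. t - f) > 0" by simp
  moreover have "t - x < 0" using insert by simp
  ultimately have "((-1) ^ card F * (\<Prod>f\<in>F. t - f)) * (-1 * (t - x)) > 0"
    by (simp add: mult_pos_pos)
  then show ?case using insert by (simp add: algebra_simps)
qed

lemma cvert_poly:
  fixes a :: "real ^ 'd::{finite,wellorder}" and b :: real
  shows "\<exists>p. degree p \<le> CARD('d) \<and> (\<forall>i. a \<bullet> (cvert i :: real^('d::{finite,wellorder})) + b = poly p (real i))"
  using rep_poly[of a b] unfolding cvert_def by blast

lemma cvert_inj: "inj (cvert :: nat \<Rightarrow> real^('d::{finite,wellorder}))"
proof -
  have "degree [:0, 1::real:] \<le> CARD('d)" by simp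
  then obtain a :: "real^('d::{finite,wellorder})" and b where ab: "\<forall>t. a \<bullet> (moment t :: real^('d::{finite,wellorder})) + b = poly [:0, 1:] t"
    using surj_poly by blast
  show ?thesis
  proof (rule injI)
    fix i j assume "(cvert i :: real^('d::{finite,wellorder})) = cvert j"
    then have "a \<bullet> (moment (real i) :: real^('d::{finite,wellorder})) + b = a \<bullet> (moment (real j) :: real^('d::{finite,wellorder})) + b"
      by (simp add: cvert_def)
    then show "i = j" using ab by simp
  qed
qed

lemma indep:
  assumes "finite S" "card S \<le> Suc CARD('d::{finite,wellorder})"
  shows "\<not> affine_dependent (cvert ` S :: (real^('d::{finite,wellorder})) set)"
proof
  assume "affine_dependent (cvert ` S :: (real^('d::{finite,wellorder})) set)"
  then obtain s where s: "s \<in> S" and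
    h: "(cvert s :: real^('d::{finite,wellorder})) \<in> affine hull (cvert ` S - {cvert s})"
    unfolding affine_dependent_def by blast
  have img: "(cvert ` S - {cvert s} :: (real^('d::{finite,wellorder})) set) = cvert ` (S - {s})"
    using image_set_diff[OF cvert_inj[where 'd='d], of S "{s}"] by simp
  define p where "p = pr (real ` (S - {s}))"
  have "card (real ` (S - {s})) = card (S - {s})" by (simp add: card_image)
  also have "\<dots> \<le> CARD('d)" using assms s by simp
  finally have "degree p \<le> CARD('d)" using assms by (simp add: p_def degree_pr)
  then obtain a :: "real^('d::{finite,wellorder})" and b where ab: "\<forall>t. a \<bullet> (moment t :: real^('d::{finite,wellorder})) + b = poly p t"
    using surj_poly by blast
  have "cvert ` (S - {s}) \<subseteq> {x :: real^('d::{finite,wellorder}). a \<bullet> x = - b}"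
  proof
    fix x :: "real^('d::{finite,wellorder})" assume "x \<in> cvert ` (S - {s})"
    then obtain i where i: "i \<in> S - {s}" "x = cvert i" by auto
    have fin: "finite (real ` (S - {s}))" using assms(1) by simp
    have "real i \<in> real ` (S - {s})" using i(1) by (rule imageI)
    then have "\<exists>f\<in>real ` (S - {s}). real i - f = 0" by force
    then have "(\<Prod>f\<in>real ` (S - {s}). real i - f) = 0" using prod_zero_iff[OF fin] by blast
    then have "poly p (real i) = 0" by (simp add: p_def poly_pr)
    moreover have "a \<bullet> (moment (real i) :: real^('d::{finite,wellorder})) + b = poly p (real i)" using ab[rule_format, of "real i"] .
    ultimately have "a \<bullet> x + b = 0" using i by (simp add: cvert_def)
    then show "x \<in> {x. a \<bullet> x = - b}" by (simp add: eq_neg_iff_add_eq_0)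
  qed
  then have hs: "affine hull (cvert ` (S - {s})) \<subseteq> {x :: real^('d::{finite,wellorder}). a \<bullet> x = - b}"
    by (rule hull_minimal) (rule affine_hyperplane)
  have "(cvert s :: real^('d::{finite,wellorder})) \<in> affine hull (cvert ` (S - {s}))" using h img by simp
  then have "(cvert s :: real^('d::{finite,wellorder})) \<in> {x :: real^('d::{finite,wellorder}). a \<bullet> x = - b}" by (rule subsetD[OF hs])
  then have "a \<bullet> (cvert s :: real^('d::{finite,wellorder})) + b = 0" by (simp add: eq_neg_iff_add_eq_0)
  moreover have "poly p (real s) \<noteq> 0"
  proof -
    have fin: "finite (real ` (S - {s}))" using assms(1) by simp
    have "\<not> (\<exists>f\<in>real ` (S - {s}). real s - f = 0)" by auto
    then have "(\<Prod>f\<in>real ` (S - {s}). real s - f) \<noteq> 0" using prod_zero_iff[OF fin] by blast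
    then show ?thesis by (simp add: p_def poly_pr)
  qed
  moreover have "a \<bullet> (moment (real s) :: real^('d::{finite,wellorder})) + b = poly p (real s)" using ab[rule_format, of "real s"] .
  ultimately show False by (simp add: cvert_def)
qed

lemma circuit_card:
  assumes "circuit n C TYPE('d::{finite,wellorder})"
  shows "finite C \<and> card C = CARD('d) + 2"
proof -
  have C: "C \<subseteq> {1..n}" "affine_dependent (cvert ` C :: (real^('d::{finite,wellorder})) set)"
    "\<And>C'. C' \<subset> C \<Longrightarrow> \<not> affine_dependent (cvert ` C' :: (real^('d::{finite,wellorder})) set)"
    using assms unfolding circuit_def by auto
  have fin: "finite C" using C(1) finite_subset by blast
  have "card C \<ge> CARD('d) + 2"
  proof (rule ccontr)
    assume "\<not> ?thesis"
    then have "card C \<le> Suc CARD('d)" by simp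
    then show False using indep[OF fin, where 'd='d] C(2) by simp
  qed
  moreover have "card C \<le> CARD('d) + 2"
  proof (rule ccontr)
    assume "\<not> ?thesis"
    then obtain C' where C': "C' \<subseteq> C" "card C' = CARD('d) + 2"
      using obtain_subset_with_card_n[of "CARD('d) + 2" C] by force
    then have "C' \<subset> C" using \<open>\<not> _\<close> by auto
    have "finite C'" using C' fin finite_subset by blast
    have "card (cvert ` C' :: (real^('d::{finite,wellorder})) set) = CARD('d) + 2"
      using C' card_image[OF inj_on_subset[OF cvert_inj[where 'd='d]]] by simp
    then have "affine_dependent (cvert ` C' :: (real^('d::{finite,wellorder})) set)"
      by (intro affine_dependent_biggerset) (auto simp: \<open>finite C'\<close>)
    then show False using C(3)[OF \<open>C' \<subset> C\<close>] by simp
  qed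
  ultimately show ?thesis using fin by simp
qed

lemma lower_upper_F:
  assumes fin: "finite C" and cC: "card C = CARD('d::{finite,wellorder}) + 2"
  defines "t1 \<equiv> Min C"
  defines "F \<equiv> C - {t1}"
  shows "(F \<in> lower_triang C TYPE('d) \<longleftrightarrow> odd CARD('d)) \<and>
         (F \<in> upper_triang C TYPE('d) \<longleftrightarrow> even CARD('d))"
proof -
  let ?d = "CARD('d)"
  have Cne: "C \<noteq> {}" using cC by auto
  have t1C: "t1 \<in> C" using Min_in[OF fin Cne] by (simp add: t1_def)
  have finF: "finite F" using fin by (simp add: F_def)
  have cF: "card F = ?d + 1" using cC t1C by (simp add: F_def)
  have FC: "F \<subseteq> C" by (auto simp: F_def)
  have CF: "C - F = {t1}" using t1C by (auto simp: F_def)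
  define RF where "RF = real ` F"
  have finRF: "finite RF" using finF by (simp add: RF_def)
  have cRF: "card RF = Suc ?d" using cF by (simp add: RF_def card_image)
  define P where "P = (\<Prod>f\<in>RF. real t1 - f)"
  have gt: "\<forall>f\<in>RF. real t1 < f"
  proof
    fix f assume "f \<in> RF"
    then obtain j where j: "j \<in> F" "f = real j" by (auto simp: RF_def)
    have "t1 \<le> j" using j fin by (simp add: t1_def F_def)
    moreover have "j \<noteq> t1" using j by (simp add: F_def)
    ultimately show "real t1 < f" using j by simp
  qed
  have sgn: "(-1) ^ Suc ?d * P > 0" using sign_prod[OF finRF gt] cRF by (simp add: P_def)
  have E: "\<exists>(a::real^('d::{finite,wellorder})) b. (\<forall>i\<in>F. a \<bullet> (cvert i :: real^('d::{finite,wellorder})) + b = real i ^ (?d + 1)) \<and>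
      a \<bullet> (cvert t1 :: real^('d::{finite,wellorder})) + b = real t1 ^ (?d + 1) - P"
  proof -
    have "degree (monom 1 (Suc ?d) - pr RF) \<le> ?d" by (rule degree_top[OF finRF cRF])
    then obtain a :: "real^('d::{finite,wellorder})" and b where ab: "\<forall>t. a \<bullet> (moment t :: real^('d::{finite,wellorder})) + b = poly (monom 1 (Suc ?d) - pr RF) t"
      using surj_poly by blast
    have ev: "a \<bullet> (cvert i :: real^('d::{finite,wellorder})) + b = real i ^ (?d + 1) - (\<Prod>f\<in>RF. real i - f)" for i
      using ab[rule_format, of "real i"] by (simp add: cvert_def poly_monom poly_pr)
    have "\<forall>i\<in>F. a \<bullet> (cvert i :: real^('d::{finite,wellorder})) + b = real i ^ (?d + 1)"
    proof
      fix i assume "i \<in> F"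
      then have "real i \<in> RF" by (simp add: RF_def)
      then have "\<exists>f\<in>RF. real i - f = 0" by force
      then have "(\<Prod>f\<in>RF. real i - f) = 0" using prod_zero_iff[OF finRF] by blast
      then show "a \<bullet> (cvert i :: real^('d::{finite,wellorder})) + b = real i ^ (?d + 1)" using ev[of i] by simp
    qed
    moreover have "a \<bullet> (cvert t1 :: real^('d::{finite,wellorder})) + b = real t1 ^ (?d + 1) - P" using ev[of t1] by (simp add: P_def)
    ultimately show ?thesis by blast
  qed
  have U: "real t1 ^ (?d + 1) - (a \<bullet> (cvert t1 :: real^('d::{finite,wellorder})) + b) = P"
    if h: "\<forall>i\<in>F. a \<bullet> (cvert i :: real^('d::{finite,wellorder})) + b = real i ^ (?d + 1)" for a :: "real^('d::{finite,wellorder})" and b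
  proof -
    obtain p where p: "degree p \<le> ?d" "\<forall>i. a \<bullet> (cvert i :: real^('d::{finite,wellorder})) + b = poly p (real i)"
      using cvert_poly[of a b] by blast
    have "\<forall>f\<in>RF. poly p f = f ^ Suc ?d"
    proof
      fix f assume "f \<in> RF"
      then obtain j where j: "j \<in> F" "f = real j" by (auto simp: RF_def)
      show "poly p f = f ^ Suc ?d" using h j p(2)[rule_format, of j] by simp
    qed
    from interp_unique[OF finRF cRF p(1) this, of "real t1"]
    show ?thesis using p(2)[rule_format, of t1] by (simp add: P_def)
  qed
  have low: "F \<in> lower_triang C TYPE('d) \<longleftrightarrow> P > 0"
  proof
    assume "F \<in> lower_triang C TYPE('d)"
    then obtain a :: "real^('d::{finite,wellorder})" and b where h: "\<forall>i\<in>F. a \<bullet> (cvert i :: real^('d::{finite,wellorder})) + b = real i ^ (?d + 1)"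
      "\<forall>j\<in>C - F. a \<bullet> (cvert j :: real^('d::{finite,wellorder})) + b < real j ^ (?d + 1)"
      unfolding lower_triang_def by blast
    show "P > 0" using U[OF h(1)] h(2) CF by auto
  next
    assume "P > 0"
    obtain a :: "real^('d::{finite,wellorder})" and b where h: "\<forall>i\<in>F. a \<bullet> (cvert i :: real^('d::{finite,wellorder})) + b = real i ^ (?d + 1)"
      "a \<bullet> (cvert t1 :: real^('d::{finite,wellorder})) + b = real t1 ^ (?d + 1) - P" using E by blast
    have "\<forall>j\<in>C - F. a \<bullet> (cvert j :: real^('d::{finite,wellorder})) + b < real j ^ (?d + 1)" using h(2) CF \<open>P > 0\<close> by simp
    then show "F \<in> lower_triang C TYPE('d)" unfolding lower_triang_def using FC cF h(1) by blast
  qed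
  have upp: "F \<in> upper_triang C TYPE('d) \<longleftrightarrow> P < 0"
  proof
    assume "F \<in> upper_triang C TYPE('d)"
    then obtain a :: "real^('d::{finite,wellorder})" and b where h: "\<forall>i\<in>F. a \<bullet> (cvert i :: real^('d::{finite,wellorder})) + b = real i ^ (?d + 1)"
      "\<forall>j\<in>C - F. a \<bullet> (cvert j :: real^('d::{finite,wellorder})) + b > real j ^ (?d + 1)"
      unfolding upper_triang_def by blast
    show "P < 0" using U[OF h(1)] h(2) CF by auto
  next
    assume "P < 0"
    obtain a :: "real^('d::{finite,wellorder})" and b where h: "\<forall>i\<in>F. a \<bullet> (cvert i :: real^('d::{finite,wellorder})) + b = real i ^ (?d + 1)"
      "a \<bullet> (cvert t1 :: real^('d::{finite,wellorder})) + b = real t1 ^ (?d + 1) - P" using E by blast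
    have "\<forall>j\<in>C - F. a \<bullet> (cvert j :: real^('d::{finite,wellorder})) + b > real j ^ (?d + 1)" using h(2) CF \<open>P < 0\<close> by simp
    then show "F \<in> upper_triang C TYPE('d)" unfolding upper_triang_def using FC cF h(1) by blast
  qed
  have "odd ?d \<Longrightarrow> P > 0" using sgn by simp
  moreover have "even ?d \<Longrightarrow> P < 0" using sgn by (simp add: zero_less_mult_iff)
  ultimately show ?thesis using low upp by auto
qed

lemma hull_meas: "finite S \<Longrightarrow> convex hull (cvert ` S :: (real^('d::{finite,wellorder})) set) \<in> lmeasurable"
  by (intro lmeasurable_compact compact_convex_hull finite_imp_compact) simp

lemma vol_pos:
  assumes "finite S" "card S = CARD('d::{finite,wellorder}) + 1"
  shows "measure lebesgue (convex hull (cvert ` S :: (real^('d::{finite,wellorder})) set)) > 0"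
proof -
  have ind: "\<not> affine_dependent (cvert ` S :: (real^('d::{finite,wellorder})) set)" using indep[OF assms(1), where 'd='d] assms(2) by simp
  have "card (cvert ` S :: (real^('d::{finite,wellorder})) set) = Suc DIM(real^('d::{finite,wellorder}))"
    using assms(2) card_image[OF inj_on_subset[OF cvert_inj[where 'd='d]]] by simp
  then have "interior (convex hull (cvert ` S :: (real^('d::{finite,wellorder})) set)) \<noteq> {}"
    using interior_convex_hull_eq_empty ind by blast
  then have "\<not> negligible (convex hull (cvert ` S :: (real^('d::{finite,wellorder})) set))"
    using negligible_convex_interior[OF convex_convex_hull] by blast
  then have "measure lebesgue (convex hull (cvert ` S :: (real^('d::{finite,wellorder})) set)) \<noteq> 0"
    using negligible_iff_measure0[OF hull_meas[OF assms(1)]] by blast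
  then show ?thesis using measure_nonneg[of lebesgue] by (simp add: order_less_le)
qed

lemma sum_triang:
  assumes "triangulation n T TYPE('d::{finite,wellorder})"
  shows "(\<Sum>S\<in>T. measure lebesgue (convex hull (cvert ` S :: (real^('d::{finite,wellorder})) set)))
       = measure lebesgue (convex hull (cvert ` {1..n} :: (real^('d::{finite,wellorder})) set))"
proof -
  have T: "finite T" "\<forall>S\<in>T. is_dsimplex n S TYPE('d)"
    "(\<Union>S\<in>T. convex hull (cvert ` S :: (real^('d::{finite,wellorder})) set)) = convex hull (cvert ` {1..n})"
    "\<forall>S\<in>T. \<forall>S'\<in>T. convex hull (cvert ` S :: (real^('d::{finite,wellorder})) set) \<inter> convex hull (cvert ` S') = convex hull (cvert ` (S \<inter> S'))"
    using assms unfolding triangulation_def by blast+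
  have simp: "S \<subseteq> {1..n} \<and> card S = CARD('d) + 1" if "S \<in> T" for S
    using T(2) that unfolding is_dsimplex_def by blast
  have finS: "finite S" if "S \<in> T" for S using simp[OF that] finite_subset by blast
  have "measure lebesgue (\<Union>S\<in>T. convex hull (cvert ` S :: (real^('d::{finite,wellorder})) set)) = (\<Sum>S\<in>T. measure lebesgue (convex hull (cvert ` S :: (real^('d::{finite,wellorder})) set)))"
  proof (rule measure_negligible_finite_Union_image[OF T(1)])
    show "\<And>S. S \<in> T \<Longrightarrow> convex hull (cvert ` S :: (real^('d::{finite,wellorder})) set) \<in> lmeasurable"
      using finS hull_meas by blast
    show "pairwise (\<lambda>S S'. negligible (convex hull (cvert ` S :: (real^('d::{finite,wellorder})) set) \<inter> convex hull (cvert ` S'))) T"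
    proof (rule pairwiseI)
      fix S S' assume S: "S \<in> T" and S': "S' \<in> T" and ne: "S \<noteq> S'"
      have "S \<inter> S' \<noteq> S"
      proof
        assume "S \<inter> S' = S"
        then have "S \<subseteq> S'" by blast
        then have "S = S'" using card_subset_eq[OF finS[OF S'] _] simp[OF S] simp[OF S'] by metis
        then show False using ne by simp
      qed
      then have "S \<inter> S' \<subset> S" by blast
      then have "card (S \<inter> S') < card S" using psubset_card_mono[OF finS[OF S]] by blast
      then have c: "card (S \<inter> S') \<le> CARD('d)" using simp[OF S] by simp
      have fI: "finite (S \<inter> S')" using finS[OF S] by simp
      have "card (cvert ` (S \<inter> S') :: (real^('d::{finite,wellorder})) set) \<le> DIM(real^('d::{finite,wellorder}))"
        using c card_image_le[OF fI, of "cvert :: nat \<Rightarrow> real^('d::{finite,wellorder})"] by simp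
      then have "interior (convex hull (cvert ` (S \<inter> S') :: (real^('d::{finite,wellorder})) set)) = {}"
        using empty_interior_convex_hull fI by blast
      then have "negligible (convex hull (cvert ` (S \<inter> S') :: (real^('d::{finite,wellorder})) set))"
        using negligible_convex_interior[OF convex_convex_hull] by blast
      then show "negligible (convex hull (cvert ` S :: (real^('d::{finite,wellorder})) set) \<inter> convex hull (cvert ` S'))"
        using T(4) S S' by simp
    qed
  qed
  then show ?thesis using T(3) by simp
qed

lemma lex_conv: "lex_less xs ys \<longleftrightarrow> ord_class.lexordp xs ys"
  by (simp add: lex_less_def List.lexordp_def lexordp_conv_lexord)

lemma lex_step:
  fixes g g' :: "nat \<Rightarrow> real"
  assumes "1 \<le> k" "k \<le> n" "\<forall>i. 1 \<le> i \<and> i < k \<longrightarrow> g i = g' i" "g k < g' k"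
  shows "lex_less (map g [1..<n+1]) (map g' [1..<n+1])"
proof -
  have "[1..<n+1] = [1..<k] @ [k..<n+1]" using assms upt_add_eq_append[of 1 k "n+1-k"] by simp
  also have "[k..<n+1] = k # [Suc k..<n+1]" using assms by (simp add: upt_conv_Cons)
  finally have l: "[1..<n+1] = [1..<k] @ k # [Suc k..<n+1]" .
  have "map g [1..<k] = map g' [1..<k]" using assms(3) by simp
  then have "map g' [1..<n+1] = map g [1..<k] @ g' k # map g' [Suc k..<n+1]" unfolding l by simp
  moreover have "map g [1..<n+1] = map g [1..<k] @ g k # map g [Suc k..<n+1]" unfolding l by simp
  ultimately show ?thesis unfolding lex_conv using assms(4)
    by (simp only:) (rule lexordp_append_left_rightI)
qed

lemma main:
  assumes tT: "triangulation n T TYPE('d::{finite,wellorder})"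
    and tT': "triangulation n T' TYPE('d)"
    and up: "up_flip n T T' TYPE('d)"
  shows "if even CARD('d) then lex_less (gkz n T' TYPE('d)) (gkz n T TYPE('d))
     else lex_less (gkz n T TYPE('d)) (gkz n T' TYPE('d))"
proof -
  let ?d = "CARD('d)"
  obtain C where circ: "circuit n C TYPE('d)" and out: "outside T C = outside T' C"
    and rl: "restrict_to T C = lower_triang C TYPE('d)" and ru: "restrict_to T' C = upper_triang C TYPE('d)"
    using up unfolding up_flip_def by blast
  have finC: "finite C" and cC: "card C = ?d + 2" using circuit_card[OF circ] by auto
  have Cn: "C \<subseteq> {1..n}" using circ unfolding circuit_def by blast
  define t1 where "t1 = Min C"
  define F where "F = C - {t1}"
  have Cne: "C \<noteq> {}" using cC by auto
  have t1C: "t1 \<in> C" using Min_in[OF finC Cne] by (simp add: t1_def)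
  have t1n: "1 \<le> t1" "t1 \<le> n" using t1C Cn by auto
  have finF: "finite F" using finC by (simp add: F_def)
  have cF: "card F = ?d + 1" using cC t1C by (simp add: F_def)
  have LU: "(F \<in> lower_triang C TYPE('d) \<longleftrightarrow> odd ?d) \<and> (F \<in> upper_triang C TYPE('d) \<longleftrightarrow> even ?d)"
    using lower_upper_F[OF finC cC] by (simp add: t1_def F_def)
  define vol where "vol S = fact ?d * measure lebesgue (convex hull (cvert ` S :: (real^('d::{finite,wellorder})) set))" for S
  have gk: "gkz_entry X i TYPE('d) = (\<Sum>S\<in>{S\<in>X. i \<in> S}. vol S)" for X i
    by (simp add: gkz_entry_def vol_def)
  have finT: "finite T" "finite T'" using tT tT' unfolding triangulation_def by blast+
  have eqs: "gkz_entry T i TYPE('d) = gkz_entry T' i TYPE('d)" if "i < t1" for i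
  proof -
    have "i \<notin> C" using that Min_le[OF finC] by (force simp: t1_def)
    then have "{S\<in>X. i \<in> S} = {S\<in>outside X C. i \<in> S}" for X
      by (auto simp: outside_def)
    then have "{S\<in>T. i \<in> S} = {S\<in>T'. i \<in> S}" using out by metis
    then show ?thesis unfolding gk by simp
  qed
  have split: "(\<Sum>S\<in>{S\<in>X. t1 \<in> S}. vol S) = (\<Sum>S\<in>{S\<in>outside X C. t1 \<in> S}. vol S)
      + (\<Sum>S\<in>{S\<in>restrict_to X C. t1 \<in> S}. vol S)" if "finite X" for X
  proof -
    have "{S\<in>X. t1 \<in> S} = {S\<in>outside X C. t1 \<in> S} \<union> {S\<in>restrict_to X C. t1 \<in> S}"
      by (auto simp: outside_def restrict_to_def)
    moreover have "finite {S\<in>outside X C. t1 \<in> S}" "finite {S\<in>restrict_to X C. t1 \<in> S}"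
      using that by (auto simp: outside_def restrict_to_def)
    moreover have "{S\<in>outside X C. t1 \<in> S} \<inter> {S\<in>restrict_to X C. t1 \<in> S} = {}"
      by (auto simp: outside_def restrict_to_def)
    ultimately show ?thesis by (simp add: sum.union_disjoint)
  qed
  have rm: "{S\<in>L. t1 \<in> S} = L - {F}" if "L = lower_triang C TYPE('d) \<or> L = upper_triang C TYPE('d)" for L
  proof -
    have "S \<subseteq> C \<and> card S = ?d + 1" if "S \<in> L" for S
      using that \<open>L = _ \<or> _\<close> by (auto simp: lower_triang_def upper_triang_def)
    then have "S = F" if "S \<in> L" "t1 \<notin> S" for S
    proof -
      have "S \<subseteq> F" using \<open>\<And>S. S \<in> L \<Longrightarrow> _\<close>[OF that(1)] that(2) by (auto simp: F_def)
      then show ?thesis using card_subset_eq[OF finF] cF \<open>\<And>S. S \<in> L \<Longrightarrow> _\<close>[OF that(1)] by metis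
    qed
    moreover have "t1 \<notin> F" by (simp add: F_def)
    ultimately show ?thesis by blast
  qed
  have finL: "finite (lower_triang C TYPE('d))" "finite (upper_triang C TYPE('d))"
    using rl[symmetric] ru[symmetric] finT unfolding restrict_to_def by auto
  have sums: "(\<Sum>S\<in>lower_triang C TYPE('d). vol S) = (\<Sum>S\<in>upper_triang C TYPE('d). vol S)"
  proof -
    have dec: "(\<Sum>S\<in>X. vol S) = (\<Sum>S\<in>outside X C. vol S) + (\<Sum>S\<in>restrict_to X C. vol S)" if "finite X" for X
    proof -
      have "X = outside X C \<union> restrict_to X C" by (auto simp: outside_def restrict_to_def)
      moreover have "outside X C \<inter> restrict_to X C = {}" by (auto simp: outside_def restrict_to_def)
      moreover have "finite (outside X C)" "finite (restrict_to X C)" using that by (auto simp: outside_def restrict_to_def)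
      ultimately show ?thesis by (metis sum.union_disjoint)
    qed
    have "(\<Sum>S\<in>T. vol S) = (\<Sum>S\<in>T'. vol S)"
      using sum_triang[OF tT] sum_triang[OF tT'] by (simp add: vol_def sum_distrib_left[symmetric])
    then show ?thesis using dec[OF finT(1)] dec[OF finT(2)] out rl ru by simp
  qed
  have vF: "vol F > 0" using vol_pos[OF finF cF] by (simp add: vol_def)
  define A where "A = (\<Sum>S\<in>{S\<in>outside T C. t1 \<in> S}. vol S)"
  have e1: "gkz_entry T t1 TYPE('d) = A + ((\<Sum>S\<in>lower_triang C TYPE('d). vol S)
      - (if F \<in> lower_triang C TYPE('d) then vol F else 0))"
    using split[OF finT(1)] rl rm[of "lower_triang C TYPE('d)"] sum_diff1[OF finL(1), of vol F]
    by (simp add: gk A_def)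
  have e2: "gkz_entry T' t1 TYPE('d) = A + ((\<Sum>S\<in>upper_triang C TYPE('d). vol S)
      - (if F \<in> upper_triang C TYPE('d) then vol F else 0))"
    using split[OF finT(2)] ru rm[of "upper_triang C TYPE('d)"] sum_diff1[OF finL(2), of vol F] out
    by (simp add: gk A_def)
  have eqs': "\<forall>i. 1 \<le> i \<and> i < t1 \<longrightarrow> gkz_entry T i TYPE('d) = gkz_entry T' i TYPE('d)" using eqs by blast
  show ?thesis
  proof (cases "even ?d")
    case True
    then have "gkz_entry T' t1 TYPE('d) < gkz_entry T t1 TYPE('d)"
      using e1 e2 LU sums vF by simp
    then have "lex_less (gkz n T' TYPE('d)) (gkz n T TYPE('d))"
      unfolding gkz_def using lex_step[OF t1n, of "\<lambda>i. gkz_entry T' i TYPE('d)" "\<lambda>i. gkz_entry T i TYPE('d)"] eqs' by simp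
    then show ?thesis using True by simp
  next
    case False
    then have "gkz_entry T t1 TYPE('d) < gkz_entry T' t1 TYPE('d)"
      using e1 e2 LU sums vF by simp
    then have "lex_less (gkz n T TYPE('d)) (gkz n T' TYPE('d))"
      unfolding gkz_def using lex_step[OF t1n, of "\<lambda>i. gkz_entry T i TYPE('d)" "\<lambda>i. gkz_entry T' i TYPE('d)"] eqs' by simp
    then show ?thesis using False by simp
  qed
qed

theorem proposition1:
  fixes n :: nat and T T' :: "nat set set"
  assumes "n > CARD('d::{finite,wellorder})"
    and "triangulation n T TYPE('d)"
    and "triangulation n T' TYPE('d)"
    and "differ_by_flip n T T' TYPE('d)"
  shows "up_flip n T T' TYPE('d) \<longleftrightarrow>
    (if even CARD('d) then lex_less (gkz n T' TYPE('d)) (gkz n T TYPE('d))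
     else lex_less (gkz n T TYPE('d)) (gkz n T' TYPE('d)))"
proof
  assume "up_flip n T T' TYPE('d)"
  then show "if even CARD('d) then lex_less (gkz n T' TYPE('d)) (gkz n T TYPE('d))
     else lex_less (gkz n T TYPE('d)) (gkz n T' TYPE('d))" using main assms(2,3) by blast
next
  assume h: "if even CARD('d) then lex_less (gkz n T' TYPE('d)) (gkz n T TYPE('d))
     else lex_less (gkz n T TYPE('d)) (gkz n T' TYPE('d))"
  show "up_flip n T T' TYPE('d)"
  proof (rule ccontr)
    assume "\<not> up_flip n T T' TYPE('d)"
    then have "up_flip n T' T TYPE('d)" using assms(4) unfolding differ_by_flip_def by blast
    then have h2: "if even CARD('d) then lex_less (gkz n T TYPE('d)) (gkz n T' TYPE('d))
     else lex_less (gkz n T' TYPE('d)) (gkz n T TYPE('d))" using main assms(2,3) by blast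
    have asym: "\<not> (lex_less xs ys \<and> lex_less ys xs)" for xs ys :: "real list"
      unfolding lex_conv using lexordp_antisym by metis
    show False using h h2 asym by (simp split: if_splits)
  qed
qed

end
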